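(* If $L$ is a $k$-flat of $I(\mathfrak{gl}_n,V\oplus\bigwedge^2)$, then $\{(a,b)\in\mathbb{E}^\ast_n:\vec v(a,b)\in L\}$ is a $k$-ensemble.
   Context: Identify the diagonal Cartan subalgebra of $\mathfrak{gl}_n$ with $\mathbb{R}^n$ with coordinates $x_1,\dots,x_n$, and let $W=\{x_1\ge\cdots\ge x_n\}$. For $1\le i\le j\le n$ let $\lambda_{i,j}^\perp$ be the hyperplane $x_i+x_j=0$ (for $i=j$: $x_i=0$); $I(\mathfrak{gl}_n,V\oplus\bigwedge^2)$ is the arrangement of these hyperplanes restricted to $W$. A flat is a set $W\cap\bigcap_{(i,j)\in T}\lambda_{i,j}^\perp$ for a (possibly empty) set $T$ of pairs $i\le j$; a $k$-flat is one whose linear span has dimension $k$. Let $\vec v(a,b)\in\mathbb{R}^n$ have $a$ ones, then $n-a-b$ zeros, then $b$ minus-ones. Order $\mathbb{N}^2$ by $(a,b)\le(c,d)\iff a\le c, b\le d$, with level $\ell(a,b)=a+b$. Let $\mathbb{E}_n=\{P\in\mathbb{N}^2:\ell(P)\le n\}$, $\mathbb{E}^\ast_n=\mathbb{E}_n\setminus\{(0,0)\}$, $\widehat{\mathbb{E}}_n=\mathbb{E}_n\sqcup\{\infty\}$ with $\infty$ the maximum; intervals $[A,B]$ are taken in $\widehat{\mathbb{E}}_n$. An ensemble is a set $\left(\bigcup_{0\le i\le m}[A_i,B_i]\right)\cap\mathbb{E}^\ast_n$ with $A_i,B_i\in\widehat{\mathbb{E}}_n$ such that (1) $A_0=(0,0)$;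 (2) $A_i\le B_i$; (3) $B_i+(1,1)\le A_{i+1}$ for $0\le i\le m-1$; (4) $\ell(B_m)<n$ or $B_m=\infty$. It is a $k$-ensemble if its elements have exactly $k$ distinct levels. *)

theory Defs
  imports "HOL-Analysis.Analysis" "HOL-Library.Function_Algebras"
begin

text \<open>Vectors of R^n are modelled as functions nat \<Rightarrow> real with coordinates x 1, ..., x n
  and all other coordinates equal to 0.\<close>

definition scalevec :: "real \<Rightarrow> (nat \<Rightarrow> real) \<Rightarrow> (nat \<Rightarrow> real)" where
  "scalevec c x = (\<lambda>i. c * x i)"

definition span_dim :: "(nat \<Rightarrow> real) set \<Rightarrow> nat" where
  "span_dim L = vector_space.dim scalevec (module.span scalevec L)"

definition chamber :: "nat \<Rightarrow> (nat \<Rightarrow> real) set" where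
  "chamber n = {x. (\<forall>i. (i < 1 \<or> n < i) \<longrightarrow> x i = 0) \<and>
                   (\<forall>i j. 1 \<le> i \<longrightarrow> i \<le> j \<longrightarrow> j \<le> n \<longrightarrow> x j \<le> x i)}"

definition hyp :: "nat \<Rightarrow> nat \<Rightarrow> (nat \<Rightarrow> real) set" where
  "hyp i j = (if i = j then {x. x i = 0} else {x. x i + x j = 0})"

definition is_flat :: "nat \<Rightarrow> (nat \<Rightarrow> real) set \<Rightarrow> bool" where
  "is_flat n L \<longleftrightarrow> (\<exists>T. T \<subseteq> {(i, j). 1 \<le> i \<and> i \<le> j \<and> j \<le> n} \<and>
        L = chamber n \<inter> (\<Inter>(i, j)\<in>T. hyp i j))"

definition is_k_flat :: "nat \<Rightarrow> nat \<Rightarrow> (nat \<Rightarrow> real) set \<Rightarrow> bool" where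
  "is_k_flat n k L \<longleftrightarrow> is_flat n L \<and> span_dim L = k"

text \<open>v(a,b): a ones, then n-a-b zeros, then b minus-ones.\<close>
definition vv :: "nat \<Rightarrow> nat \<Rightarrow> nat \<Rightarrow> (nat \<Rightarrow> real)" where
  "vv n a b = (\<lambda>i. if 1 \<le> i \<and> i \<le> a then 1
                   else if n - b < i \<and> i \<le> n \<and> a < i then -1 else 0)"

definition lev :: "nat \<times> nat \<Rightarrow> nat" where
  "lev P = fst P + snd P"

definition pleq :: "nat \<times> nat \<Rightarrow> nat \<times> nat \<Rightarrow> bool" where
  "pleq P Q \<longleftrightarrow> fst P \<le> fst Q \<and> snd P \<le> snd Q"

definition E :: "nat \<Rightarrow> (nat \<times> nat) set" where
  "E n = {P. lev P \<le> n}"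

definition Estar :: "nat \<Rightarrow> (nat \<times> nat) set" where
  "Estar n = E n - {(0, 0)}"

text \<open>Elements of \<widehat>E_n: Fin P for P \<in> E_n, and Infty (the maximum).\<close>
datatype ept = Fin "nat \<times> nat" | Infty

fun eleq :: "ept \<Rightarrow> ept \<Rightarrow> bool" where
  "eleq (Fin P) (Fin Q) = pleq P Q"
| "eleq _ Infty = True"
| "eleq Infty (Fin _) = False"

definition Ehat :: "nat \<Rightarrow> ept set" where
  "Ehat n = Fin ` E n \<union> {Infty}"

fun eshift :: "ept \<Rightarrow> ept" where
  "eshift (Fin (a, b)) = Fin (a + 1, b + 1)"
| "eshift Infty = Infty"

definition interval :: "nat \<Rightarrow> ept \<Rightarrow> ept \<Rightarrow> ept set" where
  "interval n A B = {P \<in> Ehat n. eleq A P \<and> eleq P B}"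

definition is_ensemble :: "nat \<Rightarrow> (nat \<times> nat) set \<Rightarrow> bool" where
  "is_ensemble n S \<longleftrightarrow> (\<exists>m A B.
      (\<forall>i\<le>m. A i \<in> Ehat n \<and> B i \<in> Ehat n) \<and>
      A 0 = Fin (0, 0) \<and>
      (\<forall>i\<le>m. eleq (A i) (B i)) \<and>
      (\<forall>i<m. eleq (eshift (B i)) (A (Suc i))) \<and>
      ((\<exists>P. B m = Fin P \<and> lev P < n) \<or> B m = Infty) \<and>
      S = {P \<in> Estar n. Fin P \<in> (\<Union>i\<le>m. interval n (A i) (B i))})"

definition is_k_ensemble :: "nat \<Rightarrow> nat \<Rightarrow> (nat \<times> nat) set \<Rightarrow> bool" where
  "is_k_ensemble n k S \<longleftrightarrow> is_ensemble n S \<and> card (lev ` S) = k"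

end

theory Submission
  imports Defs
begin


interpretation V: vector_space scalevec
  by unfold_locales (auto simp: scalevec_def algebra_simps fun_eq_iff)

lemma span_dim_eq: "span_dim L = V.dim (V.span L)" by (simp add: span_dim_def)

definition vp :: "nat \<Rightarrow> nat \<times> nat \<Rightarrow> (nat \<Rightarrow> real)" where
  "vp n P = vv n (fst P) (snd P)"

lemma vv_eq: "a + b \<le> n \<Longrightarrow> vv n a b i =
   (if 1 \<le> i \<and> i \<le> a then 1 else 0) - (if n - b < i \<and> i \<le> n then 1 else 0)"
  by (auto simp: vv_def)


lemma vv_chamber: "a + b \<le> n \<Longrightarrow> vv n a b \<in> chamber n"
  unfolding chamber_def by (auto simp: vv_eq)

definition okc :: "nat \<Rightarrow> nat \<Rightarrow> nat \<Rightarrow> nat \<times> nat \<Rightarrow> bool" where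
  "okc n i j P \<longleftrightarrow> pleq P (i - 1, n - j) \<or> pleq (i, n + 1 - j) P"

lemma vv_hyp: "a + b \<le> n \<Longrightarrow> 1 \<le> i \<Longrightarrow> i \<le> j \<Longrightarrow> j \<le> n \<Longrightarrow>
   vv n a b \<in> hyp i j \<longleftrightarrow> okc n i j (a, b)"
  unfolding hyp_def okc_def pleq_def
  by (cases "i = j") (auto simp: vv_eq split: if_splits)




lemma eleq_trans: "eleq x y \<Longrightarrow> eleq y z \<Longrightarrow> eleq x z"
  by (cases x; cases y; cases z) (auto simp: pleq_def)

lemma eleq_refl[simp]: "eleq x x"
  by (cases x) (auto simp: pleq_def)

lemma eshift_mono: "eleq x y \<Longrightarrow> eleq (eshift x) (eshift y)"
  by (cases x; cases y) (auto simp: pleq_def)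

fun emin :: "ept \<Rightarrow> nat \<times> nat \<Rightarrow> ept" where
  "emin (Fin p) c = Fin (min (fst p) (fst c), min (snd p) (snd c))"
| "emin Infty c = Fin c"

definition csh :: "nat \<times> nat \<Rightarrow> nat \<times> nat" where
  "csh c = (fst c + 1, snd c + 1)"

definition pmax :: "nat \<times> nat \<Rightarrow> nat \<times> nat \<Rightarrow> nat \<times> nat" where
  "pmax p q = (max (fst p) (fst q), max (snd p) (snd q))"

fun pieces :: "nat \<Rightarrow> nat \<times> nat \<Rightarrow> (nat \<times> nat) \<times> ept \<Rightarrow> ((nat \<times> nat) \<times> ept) list" where
  "pieces n c (a, B) = (if pleq a c then [(a, emin B c)] else []) @
     (if lev (pmax a (csh c)) \<le> n \<and> eleq (Fin (pmax a (csh c))) B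
      then [(pmax a (csh c), B)] else [])"

definition refine :: "nat \<Rightarrow> nat \<times> nat \<Rightarrow> ((nat \<times> nat) \<times> ept) list \<Rightarrow> ((nat \<times> nat) \<times> ept) list" where
  "refine n c xs = concat (map (pieces n c) xs)"

definition RR :: "(nat \<times> nat) \<times> ept \<Rightarrow> (nat \<times> nat) \<times> ept \<Rightarrow> bool" where
  "RR x y \<longleftrightarrow> eleq (eshift (snd x)) (Fin (fst y))"

definition good :: "nat \<Rightarrow> (nat \<times> nat) \<times> ept \<Rightarrow> bool" where
  "good n x \<longleftrightarrow> lev (fst x) \<le> n \<and> eleq (Fin (fst x)) (snd x) \<and>
      (snd x = Infty \<or> (\<exists>b. snd x = Fin b \<and> lev b < n))"

definition ensinv :: "nat \<Rightarrow> ((nat \<times> nat) \<times> ept) list \<Rightarrow> bool" where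
  "ensinv n xs \<longleftrightarrow> xs \<noteq> [] \<and> fst (hd xs) = (0, 0) \<and> (\<forall>x\<in>set xs. good n x) \<and> sorted_wrt RR xs"

definition blk :: "nat \<Rightarrow> (nat \<times> nat) \<times> ept \<Rightarrow> (nat \<times> nat) set" where
  "blk n x = {P. lev P \<le> n \<and> pleq (fst x) P \<and> eleq (Fin P) (snd x)}"

definition sem :: "nat \<Rightarrow> ((nat \<times> nat) \<times> ept) list \<Rightarrow> (nat \<times> nat) set" where
  "sem n xs = (\<Union>x\<in>set xs. blk n x)"

definition okp :: "nat \<times> nat \<Rightarrow> nat \<times> nat \<Rightarrow> bool" where
  "okp c P \<longleftrightarrow> pleq P c \<or> pleq (csh c) P"

lemma emin_le: "eleq (emin B c) B" "eleq (emin B c) (Fin c)"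
  by (cases B; auto simp: pleq_def)+

lemma eleq_emin: "eleq (Fin a) B \<Longrightarrow> pleq a c \<Longrightarrow> eleq (Fin a) (emin B c)"
  by (cases B) (auto simp: pleq_def)

lemma emin_lev: "\<exists>b. emin B c = Fin b \<and> lev b \<le> lev c"
  by (cases B) (auto simp: lev_def)

lemma pieces_good: "good n (a, B) \<Longrightarrow> lev c < n \<Longrightarrow> y \<in> set (pieces n c (a, B)) \<Longrightarrow> good n y"
proof -
  assume g: "good n (a, B)" and c: "lev c < n" and y: "y \<in> set (pieces n c (a, B))"
  obtain b where b: "emin B c = Fin b" "lev b \<le> lev c" using emin_lev by blast
  have 1: "pleq a c \<Longrightarrow> good n (a, emin B c)"
    using g c b eleq_emin[of a B c] unfolding good_def by auto
  have 2: "lev (pmax a (csh c)) \<le> n \<and> eleq (Fin (pmax a (csh c))) B \<Longrightarrow> good n (pmax a (csh c), B)"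
    using g unfolding good_def by auto
  from y 1 2 show "good n y" by (auto split: if_splits)
qed

lemma eleq_Fin_emin: "eleq (Fin P) (emin B c) \<longleftrightarrow> eleq (Fin P) B \<and> pleq P c"
  by (cases B) (auto simp: pleq_def)

lemma pleq_pmax: "pleq (pmax a b) P \<longleftrightarrow> pleq a P \<and> pleq b P"
  by (auto simp: pleq_def pmax_def)

lemma lev_mono: "pleq P Q \<Longrightarrow> lev P \<le> lev Q"
  by (auto simp: pleq_def lev_def)

lemma pleq_trans: "pleq P Q \<Longrightarrow> pleq Q R \<Longrightarrow> pleq P R"
  by (auto simp: pleq_def)

lemma pleq_refl[simp]: "pleq P P" by (auto simp: pleq_def)

lemma pieces_sem: "(\<Union>y\<in>set (pieces n c (a, B)). blk n y) = blk n (a, B) \<inter> {P. okp c P}"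
proof (intro equalityI subsetI)
  fix P assume "P \<in> (\<Union>y\<in>set (pieces n c (a, B)). blk n y)"
  then show "P \<in> blk n (a, B) \<inter> {P. okp c P}"
  proof -
    from \<open>P \<in> _\<close> obtain y where y: "y \<in> set (pieces n c (a, B))" "P \<in> blk n y" by blast
    show ?thesis
    proof (cases "pleq a c \<and> y = (a, emin B c)")
      case True then show ?thesis using y(2) by (auto simp: blk_def okp_def eleq_Fin_emin)
    next
      case False
      then have "y = (pmax a (csh c), B)" using y(1) by (auto split: if_splits)
      then show ?thesis using y(2) by (auto simp: blk_def okp_def pleq_pmax)
    qed
  qed
next
  fix P assume P: "P \<in> blk n (a, B) \<inter> {P. okp c P}"
  show "P \<in> (\<Union>y\<in>set (pieces n c (a, B)). blk n y)"
  proof (cases "pleq P c")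
    case True
    then have "pleq a c" using P pleq_trans[of a P c] by (auto simp: blk_def)
    then show ?thesis using P True by (auto simp: blk_def eleq_Fin_emin)
  next
    case False
    then have cP: "pleq (csh c) P" using P by (auto simp: okp_def)
    then have m: "pleq (pmax a (csh c)) P" using P by (auto simp: blk_def pleq_pmax)
    then have "lev (pmax a (csh c)) \<le> n" using P lev_mono[OF m] by (auto simp: blk_def)
    moreover have "eleq (Fin (pmax a (csh c))) B"
      using m P eleq_trans[of "Fin (pmax a (csh c))" "Fin P" B] by (auto simp: blk_def)
    ultimately show ?thesis using P m by (auto simp: blk_def)
  qed
qed

lemma pieces_sorted: "sorted_wrt RR (pieces n c (a, B))"
proof -
  obtain b where b: "emin B c = Fin b" "lev b \<le> lev c" using emin_lev by blast
  have "pleq b c" using emin_le(2)[of B c] b by auto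
  then have "RR (a, emin B c) (pmax a (csh c), B)"
    using b by (cases b) (auto simp: RR_def pleq_def pmax_def csh_def)
  then show ?thesis by auto
qed

lemma pieces_bounds: "p \<in> set (pieces n c (a, B)) \<Longrightarrow> eleq (snd p) B \<and> pleq a (fst p)"
  by (auto simp: emin_le pleq_def pmax_def split: if_splits)

lemma pieces_RR: "RR x y \<Longrightarrow> p \<in> set (pieces n c x) \<Longrightarrow> q \<in> set (pieces n c y) \<Longrightarrow> RR p q"
proof -
  assume r: "RR x y" and p: "p \<in> set (pieces n c x)" and q: "q \<in> set (pieces n c y)"
  obtain a B where x: "x = (a, B)" by (cases x)
  obtain a' B' where y: "y = (a', B')" by (cases y)
  have 1: "eleq (snd p) B" using pieces_bounds p x by blast
  have 2: "pleq a' (fst q)" using pieces_bounds q y by blast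
  have "eleq (eshift (snd p)) (eshift B)" using eshift_mono[OF 1] .
  moreover have "eleq (eshift B) (Fin a')" using r x y by (simp add: RR_def)
  moreover have "eleq (Fin a') (Fin (fst q))" using 2 by simp
  ultimately show "RR p q" unfolding RR_def using eleq_trans by blast
qed

lemma sorted_concat_pieces: "sorted_wrt RR xs \<Longrightarrow> sorted_wrt RR (concat (map (pieces n c) xs))"
proof (induction xs)
  case Nil then show ?case by simp
next
  case (Cons x xs)
  obtain a B where x: "x = (a, B)" by (cases x)
  have "sorted_wrt RR (pieces n c x)" using pieces_sorted x by simp
  moreover have "\<forall>p\<in>set (pieces n c x). \<forall>q\<in>set (concat (map (pieces n c) xs)). RR p q"
  proof (intro ballI)
    fix p q assume p: "p \<in> set (pieces n c x)" and q: "q \<in> set (concat (map (pieces n c) xs))"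
    then obtain y where y: "y \<in> set xs" "q \<in> set (pieces n c y)" by auto
    have "RR x y" using Cons.prems y(1) by simp
    then show "RR p q" using pieces_RR[OF _ p y(2)] by blast
  qed
  ultimately show ?case using Cons by (simp add: sorted_wrt_append)
qed

lemma refine_sem: "sem n (refine n c xs) = sem n xs \<inter> {P. okp c P}"
proof -
  have "sem n (refine n c xs) = (\<Union>x\<in>set xs. \<Union>y\<in>set (pieces n c x). blk n y)"
    by (auto simp: sem_def refine_def)
  also have "\<dots> = (\<Union>x\<in>set xs. blk n x \<inter> {P. okp c P})"
    by (rule SUP_cong[OF refl]) (metis pieces_sem surj_pair)
  finally show ?thesis by (auto simp: sem_def)
qed

lemma refine_inv: "ensinv n xs \<Longrightarrow> lev c < n \<Longrightarrow> ensinv n (refine n c xs)"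
proof -
  assume i: "ensinv n xs" and c: "lev c < n"
  obtain x0 rest where xs: "xs = x0 # rest" using i by (cases xs) (auto simp: ensinv_def)
  obtain B0 where x0: "x0 = ((0,0), B0)" using i xs by (cases x0) (auto simp: ensinv_def)
  have "pleq (0,0) c" by (simp add: pleq_def)
  then have hd: "refine n c xs = ((0,0), emin B0 c) # tl (refine n c xs)"
    by (simp add: refine_def xs x0)
  have g: "\<forall>y\<in>set (refine n c xs). good n y"
  proof
    fix y assume "y \<in> set (refine n c xs)"
    then obtain x where x: "x \<in> set xs" "y \<in> set (pieces n c x)" by (auto simp: refine_def)
    obtain a B where ab: "x = (a, B)" by (cases x)
    have "good n x" using i x(1) by (auto simp: ensinv_def)
    then show "good n y" using pieces_good[of n a B c y] x(2) ab c by simp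
  qed
  have s: "sorted_wrt RR (refine n c xs)"
    using i sorted_concat_pieces by (auto simp: ensinv_def refine_def)
  show ?thesis unfolding ensinv_def using g s hd
    by (metis fst_conv list.sel(1) list.simps(3))
qed




lemma okc_okp: "1 \<le> i \<Longrightarrow> j \<le> n \<Longrightarrow> okc n i j P = okp (i - 1, n - j) P"
  by (auto simp: okc_def okp_def csh_def Suc_diff_le)

lemma build: "finite T \<Longrightarrow> (\<forall>(i,j)\<in>T. 1 \<le> i \<and> i \<le> j \<and> j \<le> n) \<Longrightarrow>
   \<exists>xs. ensinv n xs \<and> sem n xs = {P. lev P \<le> n \<and> (\<forall>(i,j)\<in>T. okc n i j P)}"
proof (induction T rule: finite_induct)
  case empty
  have "ensinv n [((0,0), Infty)]" by (auto simp: ensinv_def good_def lev_def)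
  moreover have "sem n [((0,0), Infty)] = {P. lev P \<le> n}"
    by (auto simp: sem_def blk_def pleq_def)
  ultimately show ?case by auto
next
  case (insert t T)
  obtain i j where t: "t = (i, j)" by (cases t)
  from insert obtain xs where xs: "ensinv n xs" "sem n xs = {P. lev P \<le> n \<and> (\<forall>(i,j)\<in>T. okc n i j P)}"
    by auto
  have ij: "1 \<le> i" "i \<le> j" "j \<le> n" using insert.prems t by auto
  have lc: "lev (i - 1, n - j) < n" using ij by (auto simp: lev_def)
  have "ensinv n (refine n (i - 1, n - j) xs)" using refine_inv[OF xs(1) lc] .
  moreover have "sem n (refine n (i - 1, n - j) xs) = {P. lev P \<le> n \<and> (\<forall>(i,j)\<in>insert t T. okc n i j P)}"
    unfolding refine_sem xs(2) using okc_okp[OF ij(1) ij(3)] t by auto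
  ultimately show ?case by blast
qed

lemma inv_ensemble: "ensinv n xs \<Longrightarrow> is_ensemble n (sem n xs - {(0,0)})"
proof -
  assume i: "ensinv n xs"
  define m where "m = length xs - 1"
  define A where "A = (\<lambda>k. Fin (fst (xs ! k)))"
  define B where "B = (\<lambda>k. snd (xs ! k))"
  have len: "length xs = Suc m" using i by (auto simp: ensinv_def m_def)
  have g: "\<And>k. k \<le> m \<Longrightarrow> good n (xs ! k)" using i len by (auto simp: ensinv_def)
  have 1: "\<forall>k\<le>m. A k \<in> Ehat n \<and> B k \<in> Ehat n"
  proof (intro allI impI)
    fix k assume k: "k \<le> m"
    show "A k \<in> Ehat n \<and> B k \<in> Ehat n"
      using g[OF k] by (auto simp: A_def B_def good_def Ehat_def E_def)
  qed
  have 2: "A 0 = Fin (0, 0)" using i by (cases xs) (auto simp: A_def ensinv_def)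
  have 3: "\<forall>k\<le>m. eleq (A k) (B k)" using g by (auto simp: A_def B_def good_def)
  have 4: "\<forall>k<m. eleq (eshift (B k)) (A (Suc k))"
    using i len by (auto simp: A_def B_def ensinv_def sorted_wrt_iff_nth_less RR_def)
  have 5: "(\<exists>P. B m = Fin P \<and> lev P < n) \<or> B m = Infty"
    using g[of m] by (auto simp: B_def good_def)
  have 6: "sem n xs - {(0,0)} = {P \<in> Estar n. Fin P \<in> (\<Union>k\<le>m. interval n (A k) (B k))}"
  proof -
    have "set xs = (\<lambda>k. xs ! k) ` {..<length xs}" by (auto simp: set_conv_nth)
    also have "{..<length xs} = {..m}" using len by auto
    finally have "set xs = (\<lambda>k. xs ! k) ` {..m}" .
    then have "sem n xs = (\<Union>k\<le>m. blk n (xs ! k))" by (simp add: sem_def)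
    moreover have "\<And>k P. Fin P \<in> interval n (A k) (B k) \<longleftrightarrow> P \<in> blk n (xs ! k)"
      by (auto simp: interval_def A_def B_def blk_def Ehat_def E_def)
    ultimately show ?thesis by (auto simp: Estar_def E_def blk_def)
  qed
  show ?thesis unfolding is_ensemble_def using 1 2 3 4 5 6 by blast
qed




lemma rect_id: "a0 \<le> a \<Longrightarrow> b \<le> b1 \<Longrightarrow> a + b1 \<le> n \<Longrightarrow>
   vv n a b = vv n a0 b + vv n a b1 - vv n a0 b1"
proof (rule ext)
  fix i assume "a0 \<le> a" "b \<le> b1" "a + b1 \<le> n"
  then show "vv n a b i = (vv n a0 b + vv n a b1 - vv n a0 b1) i"
    by (simp add: vv_eq)
qed

lemma tri_id: "a0 \<le> a \<Longrightarrow> a + b \<le> n \<Longrightarrow>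
   vv n a b = vv n a0 b + vv n a0 (n - a) - vv n a0 (n - a0)"
proof (rule ext)
  fix i assume "a0 \<le> a" "a + b \<le> n"
  then show "vv n a b i = (vv n a0 b + vv n a0 (n - a) - vv n a0 (n - a0)) i"
    by (simp add: vv_eq)
qed

fun ch :: "nat \<Rightarrow> (nat \<times> nat) \<times> ept \<Rightarrow> (nat \<times> nat) set" where
  "ch n (a, Fin b) = {(fst a, y) | y. snd a \<le> y \<and> y \<le> snd b} \<union> {(x, snd b) | x. fst a \<le> x \<and> x \<le> fst b}"
| "ch n (a, Infty) = {(fst a, y) | y. snd a \<le> y \<and> fst a + y \<le> n}"

lemma ch_sub: "good n (a, B) \<Longrightarrow> ch n (a, B) \<subseteq> blk n (a, B)"
  by (cases B) (auto simp: good_def blk_def pleq_def lev_def)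

lemma ch_comp: "P \<in> ch n x \<Longrightarrow> Q \<in> ch n x \<Longrightarrow> pleq P Q \<or> pleq Q P"
proof -
  assume P: "P \<in> ch n x" and Q: "Q \<in> ch n x"
  obtain a B where x: "x = (a, B)" by (cases x)
  show ?thesis
  proof (cases B)
    case (Fin b)
    show ?thesis using P Q x Fin by (auto simp: pleq_def)
  next
    case Infty
    show ?thesis using P Q x Infty by (auto simp: pleq_def)
  qed
qed

lemma ch_level: "good n (a, B) \<Longrightarrow> P \<in> blk n (a, B) \<Longrightarrow> \<exists>Q\<in>ch n (a, B). lev Q = lev P"
proof -
  assume g: "good n (a, B)" and P: "P \<in> blk n (a, B)"
  obtain p q where Pq: "P = (p, q)" by (cases P)
  obtain a0 b0 where a: "a = (a0, b0)" by (cases a)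
  show ?thesis
  proof (cases B)
    case (Fin b)
    obtain a1 b1 where b: "b = (a1, b1)" by (cases b)
    have h: "a0 \<le> p" "b0 \<le> q" "p \<le> a1" "q \<le> b1"
      using P Pq a b Fin by (auto simp: blk_def pleq_def)
    show ?thesis
    proof (cases "p + q \<le> a0 + b1")
      case True
      then have "(a0, p + q - a0) \<in> ch n (a, B)" using h a b Fin by auto
      then show ?thesis using h Pq by (intro bexI[of _ "(a0, p + q - a0)"]) (auto simp: lev_def)
    next
      case False
      then have "(p + q - b1, b1) \<in> ch n (a, B)" using h a b Fin by auto
      then show ?thesis using h Pq False by (intro bexI[of _ "(p + q - b1, b1)"]) (auto simp: lev_def)
    qed
  next
    case Infty
    have h: "a0 \<le> p" "b0 \<le> q" "p + q \<le> n"
      using P Pq a Infty by (auto simp: blk_def pleq_def lev_def)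
    then have "(a0, p + q - a0) \<in> ch n (a, B)" using a Infty by auto
    then show ?thesis using h Pq by (intro bexI[of _ "(a0, p + q - a0)"]) (auto simp: lev_def)
  qed
qed

lemma vp_span3: "vp n P = vp n X + vp n Y - vp n Z \<Longrightarrow> X \<in> K \<Longrightarrow> Y \<in> K \<Longrightarrow> Z \<in> K \<Longrightarrow>
   vp n P \<in> V.span (vp n ` K)"
  by (metis V.span_add V.span_base V.span_diff image_eqI)

lemma ch_span: "good n (a, B) \<Longrightarrow> P \<in> blk n (a, B) \<Longrightarrow> vp n P \<in> V.span (vp n ` ch n (a, B))"
proof -
  assume g: "good n (a, B)" and P: "P \<in> blk n (a, B)"
  obtain p q where Pq: "P = (p, q)" by (cases P)
  obtain a0 b0 where a: "a = (a0, b0)" by (cases a)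
  show ?thesis
  proof (cases B)
    case (Fin b)
    obtain a1 b1 where b: "b = (a1, b1)" by (cases b)
    have h: "a0 \<le> p" "b0 \<le> q" "p \<le> a1" "q \<le> b1" "a1 + b1 < n"
      using P Pq a b Fin g by (auto simp: blk_def pleq_def good_def lev_def)
    have "vp n P = vp n (a0, q) + vp n (p, b1) - vp n (a0, b1)"
      using rect_id[of a0 p q b1 n] h Pq by (simp add: vp_def)
    moreover have "(a0, q) \<in> ch n (a, B)" "(p, b1) \<in> ch n (a, B)" "(a0, b1) \<in> ch n (a, B)"
      using h a b Fin by auto
    ultimately show ?thesis by (rule vp_span3)
  next
    case Infty
    have h: "a0 \<le> p" "b0 \<le> q" "p + q \<le> n"
      using P Pq a Infty by (auto simp: blk_def pleq_def lev_def)
    have "vp n P = vp n (a0, q) + vp n (a0, n - p) - vp n (a0, n - a0)"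
      using tri_id[of a0 p q n] h Pq by (simp add: vp_def)
    moreover have "(a0, q) \<in> ch n (a, B)" "(a0, n - p) \<in> ch n (a, B)" "(a0, n - a0) \<in> ch n (a, B)"
      using h a Infty by auto
    ultimately show ?thesis by (rule vp_span3)
  qed
qed

lemma blk_RR: "RR x y \<Longrightarrow> P \<in> blk n x \<Longrightarrow> Q \<in> blk n y \<Longrightarrow> pleq P Q"
proof -
  assume r: "RR x y" and P: "P \<in> blk n x" and Q: "Q \<in> blk n y"
  obtain a B where x: "x = (a, B)" by (cases x)
  obtain a' B' where y: "y = (a', B')" by (cases y)
  have 1: "eleq (Fin P) B" using P x by (auto simp: blk_def)
  have 2: "eleq (eshift B) (Fin a')" using r x y by (auto simp: RR_def)
  have 3: "pleq a' Q" using Q y by (auto simp: blk_def)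
  show ?thesis using 1 2 3 by (cases B; cases P) (auto simp: pleq_def)
qed

lemma coord_sep: "pleq P Q \<Longrightarrow> P \<noteq> Q \<Longrightarrow> lev Q \<le> n \<Longrightarrow>
   \<exists>i. vp n Q i \<noteq> 0 \<and> (\<forall>R. pleq R P \<longrightarrow> vp n R i = 0)"
proof -
  assume PQ: "pleq P Q" "P \<noteq> Q" and lQ: "lev Q \<le> n"
  obtain p q where P: "P = (p, q)" by (cases P)
  obtain a b where Q: "Q = (a, b)" by (cases Q)
  have h: "p \<le> a" "q \<le> b" "a + b \<le> n" using PQ lQ P Q by (auto simp: pleq_def lev_def)
  show ?thesis
  proof (cases "p < a")
    case True
    have "vp n Q a \<noteq> 0" using h True Q by (simp add: vp_def vv_eq)
    moreover have "\<forall>R. pleq R P \<longrightarrow> vp n R a = 0"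
    proof (intro allI impI)
      fix R assume "pleq R P"
      then show "vp n R a = 0" using h True P by (cases R) (auto simp: vp_def vv_eq pleq_def)
    qed
    ultimately show ?thesis by blast
  next
    case False
    then have qb: "q < b" using h PQ P Q by auto
    have "vp n Q (n - b + 1) \<noteq> 0" using h qb Q by (simp add: vp_def vv_eq)
    moreover have "\<forall>R. pleq R P \<longrightarrow> vp n R (n - b + 1) = 0"
    proof (intro allI impI)
      fix R assume "pleq R P"
      then show "vp n R (n - b + 1) = 0" using h qb P by (cases R) (auto simp: vp_def vv_eq pleq_def)
    qed
    ultimately show ?thesis by blast
  qed
qed

lemma span_coord0: "(\<forall>x\<in>X. x i = 0) \<Longrightarrow> y \<in> V.span X \<Longrightarrow> y i = (0::real)"
proof -
  assume X: "\<forall>x\<in>X. x i = 0" and y: "y \<in> V.span X"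
  have "V.subspace {x. x i = 0}" by (auto simp: V.subspace_def scalevec_def)
  then have "V.span X \<subseteq> {x. x i = 0}" using X by (intro V.span_minimal) auto
  then show ?thesis using y by auto
qed

lemma exists_max_lev: "finite C \<Longrightarrow> C \<noteq> {} \<Longrightarrow> \<exists>Q\<in>C. \<forall>P\<in>C. lev P \<le> lev Q"
proof -
  assume f: "finite C" and ne: "C \<noteq> {}"
  have "Max (lev ` C) \<in> lev ` C" using f ne by (intro Max_in) auto
  then obtain Q where Q: "Q \<in> C" "lev Q = Max (lev ` C)" by auto
  have "\<forall>P\<in>C. lev P \<le> lev Q" using Q(2) f by auto
  then show ?thesis using Q(1) by blast
qed

lemma chain_indep: "finite C \<Longrightarrow> C \<subseteq> E n - {(0,0)} \<Longrightarrow> (\<forall>P\<in>C. \<forall>Q\<in>C. pleq P Q \<or> pleq Q P) \<Longrightarrow>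
   V.independent (vp n ` C) \<and> inj_on (vp n) C"
proof (induction "card C" arbitrary: C rule: less_induct)
  case less
  show ?case
  proof (cases "C = {}")
    case True then show ?thesis by (simp add: V.independent_empty)
  next
    case False
    obtain Q where Q: "Q \<in> C" "\<forall>P\<in>C. lev P \<le> lev Q"
      using exists_max_lev[OF less.prems(1) False] by blast
    define D where "D = C - {Q}"
    have DQ: "\<forall>P\<in>D. pleq P Q \<and> P \<noteq> Q"
    proof
      fix P assume P: "P \<in> D"
      then have "P \<in> C" "P \<noteq> Q" by (auto simp: D_def)
      moreover have "\<not> pleq Q P"
      proof
        assume "pleq Q P"
        moreover have "lev P \<le> lev Q" using Q \<open>P \<in> C\<close> by auto
        ultimately have "P = Q" by (cases P; cases Q) (auto simp: pleq_def lev_def)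
        with \<open>P \<noteq> Q\<close> show False by simp
      qed
      ultimately show "pleq P Q \<and> P \<noteq> Q" using less.prems(3) Q(1) by blast
    qed
    have IH: "V.independent (vp n ` D) \<and> inj_on (vp n) D"
    proof (rule less.hyps)
      show "card D < card C" using less.prems(1) Q(1) unfolding D_def by (rule card_Diff1_less)
      show "finite D" using less.prems(1) by (simp add: D_def)
      show "D \<subseteq> E n - {(0,0)}" using less.prems(2) by (auto simp: D_def)
      show "\<forall>P\<in>D. \<forall>Q\<in>D. pleq P Q \<or> pleq Q P" using less.prems(3) by (auto simp: D_def)
    qed
    have "\<exists>Ps. pleq Ps Q \<and> Ps \<noteq> Q \<and> (\<forall>P\<in>D. pleq P Ps)"
    proof (cases "D = {}")
      case True
      then show ?thesis using less.prems(2) Q(1) by (intro exI[of _ "(0,0)"]) (auto simp: pleq_def)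
    next
      case False
      have fD: "finite D" using less.prems(1) by (simp add: D_def)
      obtain Ps where Ps: "Ps \<in> D" "\<forall>P\<in>D. lev P \<le> lev Ps"
        using exists_max_lev[OF fD False] by blast
      have "\<forall>P\<in>D. pleq P Ps"
      proof
        fix P assume P: "P \<in> D"
        have "pleq P Ps \<or> pleq Ps P" using less.prems(3) P Ps(1) by (auto simp: D_def)
        moreover have "lev P \<le> lev Ps" using Ps P by auto
        ultimately show "pleq P Ps" by (cases P; cases Ps) (auto simp: pleq_def lev_def)
      qed
      then show ?thesis using DQ Ps(1) by blast
    qed
    then obtain Ps where Ps: "pleq Ps Q" "Ps \<noteq> Q" "\<forall>P\<in>D. pleq P Ps" by blast
    have lQ: "lev Q \<le> n" using less.prems(2) Q(1) by (auto simp: E_def)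
    obtain i where i: "vp n Q i \<noteq> 0" "\<forall>R. pleq R Ps \<longrightarrow> vp n R i = 0"
      using coord_sep[OF Ps(1) Ps(2) lQ] by blast
    have z: "\<forall>x\<in>vp n ` D. x i = 0" using i(2) Ps(3) by auto
    have ns: "vp n Q \<notin> V.span (vp n ` D)" using span_coord0[OF z] i(1) by blast
    have C: "C = insert Q D" using Q(1) by (auto simp: D_def)
    have QD: "Q \<notin> D" by (simp add: D_def)
    have e: "vp n ` C = insert (vp n Q) (vp n ` D)" using C by simp
    have "V.independent (vp n ` C)" unfolding e
      by (rule V.independent_insertI[OF ns conjunct1[OF IH]])
    moreover have "vp n Q \<notin> vp n ` D" using ns V.span_base by blast
    then have "inj_on (vp n) (insert Q D)" using conjunct2[OF IH] QD by simp
    then have "inj_on (vp n) C" using C by simp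
    ultimately show ?thesis by blast
  qed
qed




lemma sgn_mono_real: "(b::real) \<le> a \<Longrightarrow> sgn b \<le> sgn a"
  by (auto simp: sgn_if)

lemma mono_step: "(xj::real) \<le> xi \<Longrightarrow> 0 < t \<Longrightarrow> (xi \<noteq> 0 \<Longrightarrow> t \<le> \<bar>xi\<bar>) \<Longrightarrow> (xj \<noteq> 0 \<Longrightarrow> t \<le> \<bar>xj\<bar>) \<Longrightarrow>
   xj - t * sgn xj \<le> xi - t * sgn xi"
  by (auto simp: sgn_if abs_if split: if_splits)

lemma sgn_in_L: "x \<in> chamber n \<Longrightarrow> \<forall>(i,j)\<in>T. x \<in> hyp i j \<Longrightarrow>
    (\<lambda>i. sgn (x i)) \<in> chamber n \<and> (\<forall>(i,j)\<in>T. (\<lambda>i. sgn (x i)) \<in> hyp i j)"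
proof -
  assume x: "x \<in> chamber n" and h: "\<forall>(i,j)\<in>T. x \<in> hyp i j"
  have "(\<lambda>i. sgn (x i)) \<in> chamber n" using x by (auto simp: chamber_def intro: sgn_mono_real)
  moreover have "\<forall>(i,j)\<in>T. (\<lambda>i. sgn (x i)) \<in> hyp i j"
  proof (intro ballI, clarify)
    fix i j assume "(i, j) \<in> T"
    then have "x \<in> hyp i j" using h by auto
    then show "(\<lambda>i. sgn (x i)) \<in> hyp i j"
      by (cases "i = j") (auto simp: hyp_def sgn_if)
  qed
  ultimately show ?thesis by blast
qed

lemma step_in_L: "x \<in> chamber n \<Longrightarrow> \<forall>(i,j)\<in>T. x \<in> hyp i j \<Longrightarrow> 0 < t \<Longrightarrow>
    (\<forall>i. x i \<noteq> 0 \<longrightarrow> t \<le> \<bar>x i\<bar>) \<Longrightarrow>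
    (\<lambda>i. x i - t * sgn (x i)) \<in> chamber n \<and> (\<forall>(i,j)\<in>T. (\<lambda>i. x i - t * sgn (x i)) \<in> hyp i j)"
proof -
  assume x: "x \<in> chamber n" and h: "\<forall>(i,j)\<in>T. x \<in> hyp i j" and t: "0 < t"
    and tm: "\<forall>i. x i \<noteq> 0 \<longrightarrow> t \<le> \<bar>x i\<bar>"
  have "(\<lambda>i. x i - t * sgn (x i)) \<in> chamber n"
    using x t tm unfolding chamber_def by (auto intro!: mono_step)
  moreover have "\<forall>(i,j)\<in>T. (\<lambda>i. x i - t * sgn (x i)) \<in> hyp i j"
  proof (intro ballI, clarify)
    fix i j assume "(i, j) \<in> T"
    then have "x \<in> hyp i j" using h by auto
    then show "(\<lambda>i. x i - t * sgn (x i)) \<in> hyp i j"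
    proof (cases "i = j")
      case True then show ?thesis using \<open>x \<in> hyp i j\<close> by (auto simp: hyp_def)
    next
      case False
      then have "x j = - x i" using \<open>x \<in> hyp i j\<close> by (auto simp: hyp_def)
      then show ?thesis using False by (auto simp: hyp_def sgn_minus)
    qed
  qed
  ultimately show ?thesis by blast
qed

lemma sgn_is_vv: "x \<in> chamber n \<Longrightarrow> \<exists>a b. a + b \<le> n \<and> (\<lambda>i. sgn (x i)) = vv n a b"
proof -
  assume x: "x \<in> chamber n"
  have out: "\<And>i. i < 1 \<or> n < i \<Longrightarrow> x i = 0" using x by (auto simp: chamber_def)
  have mono: "\<And>i j. 1 \<le> i \<Longrightarrow> i \<le> j \<Longrightarrow> j \<le> n \<Longrightarrow> x j \<le> x i" using x by (auto simp: chamber_def)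
  define Pos where "Pos = {i. 1 \<le> i \<and> i \<le> n \<and> x i > 0}"
  define Neg where "Neg = {i. 1 \<le> i \<and> i \<le> n \<and> x i < 0}"
  define a where "a = Max (insert 0 Pos)"
  define m where "m = Min (insert (Suc n) Neg)"
  have fP: "finite Pos" "finite Neg" by (auto simp: Pos_def Neg_def)
  have a_le: "a \<le> n" using fP by (auto simp: a_def Pos_def)
  have a_in: "a = 0 \<or> a \<in> Pos" using Max_in[of "insert 0 Pos"] fP by (auto simp: a_def)
  have m_le: "m \<le> Suc n" using fP by (auto simp: m_def)
  have m_in: "m = Suc n \<or> m \<in> Neg" using Min_in[of "insert (Suc n) Neg"] fP by (auto simp: m_def)
  have m_ge: "1 \<le> m" using m_in by (auto simp: Neg_def)
  have pos_iff: "\<And>i. 1 \<le> i \<Longrightarrow> i \<le> n \<Longrightarrow> x i > 0 \<longleftrightarrow> i \<le> a"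
  proof
    fix i assume i: "1 \<le> i" "i \<le> n" "x i > 0"
    then have "i \<in> Pos" by (auto simp: Pos_def)
    then show "i \<le> a" using fP by (auto simp: a_def)
  next
    fix i assume i: "1 \<le> i" "i \<le> n" "i \<le> a"
    then have "a \<in> Pos" using a_in by auto
    then have "x a > 0" by (auto simp: Pos_def)
    moreover have "x a \<le> x i" using mono[of i a] i a_le by auto
    ultimately show "x i > 0" by simp
  qed
  have neg_iff: "\<And>i. 1 \<le> i \<Longrightarrow> i \<le> n \<Longrightarrow> x i < 0 \<longleftrightarrow> m \<le> i"
  proof
    fix i assume i: "1 \<le> i" "i \<le> n" "x i < 0"
    then have "i \<in> Neg" by (auto simp: Neg_def)
    then show "m \<le> i" using fP by (auto simp: m_def)
  next
    fix i assume i: "1 \<le> i" "i \<le> n" "m \<le> i"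
    then have "m \<in> Neg" using m_in by auto
    then have "x m < 0" "1 \<le> m" by (auto simp: Neg_def)
    moreover have "x i \<le> x m" using mono[of m i] i \<open>1 \<le> m\<close> by auto
    ultimately show "x i < 0" by simp
  qed
  have am: "a < m"
  proof (rule ccontr)
    assume "\<not> a < m"
    then have "m \<le> a" by simp
    then have "a \<noteq> 0" using m_ge by auto
    then have "a \<in> Pos" using a_in by auto
    then have "1 \<le> a" "a \<le> n" "x a > 0" by (auto simp: Pos_def)
    moreover have "x a < 0" using neg_iff[of a] \<open>m \<le> a\<close> \<open>1 \<le> a\<close> \<open>a \<le> n\<close> by auto
    ultimately show False by simp
  qed
  define b where "b = Suc n - m"
  have ab: "a + b \<le> n" using am m_le by (auto simp: b_def)
  have nb: "n - b = m - 1" using m_le m_ge by (auto simp: b_def)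
  have "(\<lambda>i. sgn (x i)) = vv n a b"
  proof
    fix i
    show "sgn (x i) = vv n a b i"
    proof (cases "1 \<le> i \<and> i \<le> n")
      case True
      then show ?thesis using pos_iff[of i] neg_iff[of i] am nb ab
        by (auto simp: vv_eq sgn_if)
    next
      case False
      then show ?thesis using out[of i] ab nb m_ge by (auto simp: vv_eq)
    qed
  qed
  then show ?thesis using ab by blast
qed

lemma decomp:
  assumes L: "L = chamber n \<inter> (\<Inter>(i, j)\<in>T. hyp i j)"
  shows "x \<in> L \<Longrightarrow> x \<in> V.span (vp n ` {P \<in> Estar n. vp n P \<in> L})"
proof (induction "card {i. x i \<noteq> 0}" arbitrary: x rule: less_induct)
  case less
  have xL: "x \<in> chamber n" "\<forall>(i,j)\<in>T. x \<in> hyp i j" using less.prems L by auto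
  let ?S = "{i. x i \<noteq> 0}"
  have fS: "finite ?S"
  proof (rule finite_subset)
    have out: "\<And>i. i < 1 \<or> n < i \<Longrightarrow> x i = 0" using xL(1) by (auto simp: chamber_def)
    show "?S \<subseteq> {1..n}"
    proof
      fix i assume "i \<in> ?S"
      then have "\<not> (i < 1 \<or> n < i)" using out[of i] by blast
      then show "i \<in> {1..n}" by simp
    qed
  qed simp
  show ?case
  proof (cases "?S = {}")
    case True
    then have "x = 0" by (auto simp: fun_eq_iff)
    then show ?thesis by (simp add: V.span_zero)
  next
    case False
    define t where "t = Min ((\<lambda>i. \<bar>x i\<bar>) ` ?S)"
    have ne: "(\<lambda>i. \<bar>x i\<bar>) ` ?S \<noteq> {}" using False by blast
    have "t \<in> (\<lambda>i. \<bar>x i\<bar>) ` ?S" unfolding t_def using Min_in[OF _ ne] fS by blast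
    then obtain k where k: "k \<in> ?S" "\<bar>x k\<bar> = t" by blast
    have t0: "0 < t" using k by auto
    have tm: "\<forall>i. x i \<noteq> 0 \<longrightarrow> t \<le> \<bar>x i\<bar>" using fS by (auto simp: t_def)
    define s where "s = (\<lambda>i. sgn (x i))"
    define y where "y = (\<lambda>i. x i - t * sgn (x i))"
    have yL: "y \<in> L" using step_in_L[OF xL t0 tm] L by (auto simp: y_def)
    have "{i. y i \<noteq> 0} \<subseteq> ?S - {k}"
      using k by (auto simp: y_def sgn_if abs_if split: if_splits)
    then have "card {i. y i \<noteq> 0} < card ?S"
      using fS k(1) by (meson card_Diff1_less finite_Diff le_less_trans card_mono)
    then have yS: "y \<in> V.span (vp n ` {P \<in> Estar n. vp n P \<in> L})" using less.hyps yL by blast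
    obtain a b where ab: "a + b \<le> n" "s = vv n a b" using sgn_is_vv[OF xL(1)] s_def by blast
    have sL: "s \<in> L" using sgn_in_L[OF xL] L by (auto simp: s_def)
    have "(a, b) \<noteq> (0, 0)"
    proof
      assume "(a, b) = (0, 0)"
      then have "s k = 0" using ab by (auto simp: vv_def)
      then show False using k by (auto simp: s_def sgn_if split: if_splits)
    qed
    then have "(a, b) \<in> {P \<in> Estar n. vp n P \<in> L}"
      using ab sL by (auto simp: Estar_def E_def lev_def vp_def)
    then have "s \<in> vp n ` {P \<in> Estar n. vp n P \<in> L}" using ab by (force simp: vp_def)
    then have sS: "scalevec t s \<in> V.span (vp n ` {P \<in> Estar n. vp n P \<in> L})"
      by (intro V.span_scale V.span_base)
    have "x = y + scalevec t s" by (auto simp: y_def s_def scalevec_def fun_eq_iff)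
    then show ?thesis using V.span_add[OF yS sS] by simp
  qed
qed




lemma E_finite: "finite (E n)"
proof (rule finite_subset)
  show "E n \<subseteq> {0..n} \<times> {0..n}" by (auto simp: E_def lev_def)
qed simp

theorem lemma5p1:
  fixes n k :: nat and L :: "(nat \<Rightarrow> real) set"
  assumes "is_k_flat n k L"
  shows "is_k_ensemble n k {(a, b) \<in> Estar n. vv n a b \<in> L}"
proof -
  obtain T where T: "T \<subseteq> {(i, j). 1 \<le> i \<and> i \<le> j \<and> j \<le> n}"
    and L: "L = chamber n \<inter> (\<Inter>(i, j)\<in>T. hyp i j)" and k: "span_dim L = k"
    using assms by (auto simp: is_k_flat_def is_flat_def)
  have "T \<subseteq> {1..n} \<times> {1..n}" using T by auto
  then have fT: "finite T" by (rule finite_subset) simp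
  obtain xs where xs: "ensinv n xs" "sem n xs = {P. lev P \<le> n \<and> (\<forall>(i,j)\<in>T. okc n i j P)}"
    using build[OF fT] T by blast
  have memL: "\<And>x. x \<in> L \<longleftrightarrow> x \<in> chamber n \<and> (\<forall>(i,j)\<in>T. x \<in> hyp i j)"
    using L by auto
  have hyp_ok: "\<And>a b. a + b \<le> n \<Longrightarrow> (\<forall>(i,j)\<in>T. vv n a b \<in> hyp i j) \<longleftrightarrow> (\<forall>(i,j)\<in>T. okc n i j (a,b))"
  proof -
    fix a b assume ab: "a + b \<le> n"
    have "\<forall>t\<in>T. (case t of (i,j) \<Rightarrow> vv n a b \<in> hyp i j) = (case t of (i,j) \<Rightarrow> okc n i j (a,b))"
    proof
      fix t assume t: "t \<in> T"
      obtain i j where ij: "t = (i, j)" by (cases t)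
      have "1 \<le> i" "i \<le> j" "j \<le> n" using T t ij by auto
      then show "(case t of (i,j) \<Rightarrow> vv n a b \<in> hyp i j) = (case t of (i,j) \<Rightarrow> okc n i j (a,b))"
        using vv_hyp[OF ab] ij by simp
    qed
    then show "(\<forall>(i,j)\<in>T. vv n a b \<in> hyp i j) \<longleftrightarrow> (\<forall>(i,j)\<in>T. okc n i j (a,b))"
      by (meson ball_cong)
  qed
  define S where "S = {P \<in> Estar n. vp n P \<in> L}"
  have S_eq: "{(a, b) \<in> Estar n. vv n a b \<in> L} = S" by (auto simp: S_def vp_def)
  have semxs: "\<And>P. P \<in> sem n xs \<longleftrightarrow> lev P \<le> n \<and> (\<forall>(i,j)\<in>T. okc n i j P)"
    using xs(2) by blast
  have S_sem: "S = sem n xs - {(0,0)}"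
  proof (intro equalityI subsetI)
    fix P assume P: "P \<in> S"
    obtain a b where ab: "P = (a, b)" by (cases P)
    have abn: "a + b \<le> n" "(a, b) \<noteq> (0,0)" using P ab by (auto simp: S_def Estar_def E_def lev_def)
    have "vv n a b \<in> L" using P ab by (simp add: S_def vp_def)
    then have "\<forall>(i,j)\<in>T. vv n a b \<in> hyp i j" using memL by blast
    then have "\<forall>(i,j)\<in>T. okc n i j (a, b)" using hyp_ok[OF abn(1)] by blast
    then show "P \<in> sem n xs - {(0,0)}" using abn ab semxs[of P] by (simp add: lev_def)
  next
    fix P assume P: "P \<in> sem n xs - {(0,0)}"
    obtain a b where ab: "P = (a, b)" by (cases P)
    have ab_n: "a + b \<le> n" "(a, b) \<noteq> (0,0)" using P ab semxs[of P] by (auto simp: lev_def)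
    have "\<forall>(i,j)\<in>T. okc n i j (a, b)" using P ab semxs[of P] by blast
    then have "\<forall>(i,j)\<in>T. vv n a b \<in> hyp i j" using hyp_ok[OF ab_n(1)] by blast
    moreover have "vv n a b \<in> chamber n" using vv_chamber[OF ab_n(1)] .
    ultimately have "vv n a b \<in> L" using memL by blast
    then show "P \<in> S" using ab ab_n by (simp add: S_def Estar_def E_def vp_def lev_def)
  qed
  have ens: "is_ensemble n S" using inv_ensemble[OF xs(1)] S_sem by simp
  have good: "\<And>x. x \<in> set xs \<Longrightarrow> good n x" using xs(1) by (auto simp: ensinv_def)
  have chblk: "\<And>x. x \<in> set xs \<Longrightarrow> ch n x \<subseteq> blk n x"
  proof -
    fix x assume x: "x \<in> set xs"
    obtain a B where aB: "x = (a, B)" by (cases x)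
    show "ch n x \<subseteq> blk n x" using ch_sub[of n a B] good[OF x] aB by simp
  qed
  define C where "C = (\<Union>x\<in>set xs. ch n x) - {(0,0)}"
  have CS: "C \<subseteq> S"
  proof
    fix P assume "P \<in> C"
    then obtain x where x: "x \<in> set xs" "P \<in> ch n x" and P0: "P \<noteq> (0,0)" by (auto simp: C_def)
    then have "P \<in> blk n x" using chblk by blast
    then have "P \<in> sem n xs" using x(1) by (auto simp: sem_def)
    then show "P \<in> S" using P0 S_sem by simp
  qed
  have CE: "C \<subseteq> E n - {(0,0)}" using CS by (auto simp: S_def Estar_def)
  have fC: "finite C" using CE E_finite finite_subset by blast
  have chain: "\<forall>P\<in>C. \<forall>Q\<in>C. pleq P Q \<or> pleq Q P"
  proof (intro ballI)
    fix P Q assume P: "P \<in> C" and Q: "Q \<in> C"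
    obtain x y where x: "x \<in> set xs" "P \<in> ch n x" and y: "y \<in> set xs" "Q \<in> ch n y"
      using P Q by (auto simp: C_def)
    show "pleq P Q \<or> pleq Q P"
    proof (cases "x = y")
      case True then show ?thesis using ch_comp x y by blast
    next
      case False
      obtain i where i: "i < length xs" "xs ! i = x" using x(1) by (metis in_set_conv_nth)
      obtain j where j: "j < length xs" "xs ! j = y" using y(1) by (metis in_set_conv_nth)
      have srt: "\<And>i j. i < j \<Longrightarrow> j < length xs \<Longrightarrow> RR (xs ! i) (xs ! j)"
        using xs(1) unfolding ensinv_def sorted_wrt_iff_nth_less by blast
      have "i \<noteq> j" using False i j by auto
      then have "i < j \<or> j < i" by arith
      then have "RR x y \<or> RR y x" using srt i j by blast
      moreover have "P \<in> blk n x" "Q \<in> blk n y" using chblk[OF x(1)] chblk[OF y(1)] x(2) y(2) by blast+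
      ultimately show ?thesis using blk_RR by blast
    qed
  qed
  have ind: "V.independent (vp n ` C)" and injC: "inj_on (vp n) C"
    using chain_indep[OF fC CE chain] by auto
  have vp0: "vp n (0,0) = 0" by (auto simp: vp_def vv_def fun_eq_iff)
  have span_eq: "V.span (vp n ` C) = V.span L"
  proof (intro equalityI)
    have "vp n ` C \<subseteq> L" using CS by (auto simp: S_def)
    then show "V.span (vp n ` C) \<subseteq> V.span L" by (rule V.span_mono)
  next
    have "vp n ` S \<subseteq> V.span (vp n ` C)"
    proof
      fix v assume "v \<in> vp n ` S"
      then obtain P where P: "P \<in> S" "v = vp n P" by blast
      then obtain x where x: "x \<in> set xs" "P \<in> blk n x" using S_sem by (auto simp: sem_def)
      obtain a B where aB: "x = (a, B)" by (cases x)
      have "vp n P \<in> V.span (vp n ` ch n x)" using ch_span[of n a B P] good[OF x(1)] x(2) aB by simp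
      moreover have "vp n ` ch n x \<subseteq> insert 0 (vp n ` C)" using x(1) vp0 by (auto simp: C_def)
      ultimately have "vp n P \<in> V.span (insert 0 (vp n ` C))" using V.span_mono by blast
      then show "v \<in> V.span (vp n ` C)" using P by simp
    qed
    then have "V.span (vp n ` S) \<subseteq> V.span (vp n ` C)" by (rule V.span_minimal[OF _ V.subspace_span])
    moreover have "L \<subseteq> V.span (vp n ` S)" using decomp[OF L] by (auto simp: S_def)
    ultimately have "L \<subseteq> V.span (vp n ` C)" by blast
    then show "V.span L \<subseteq> V.span (vp n ` C)" by (rule V.span_minimal[OF _ V.subspace_span])
  qed
  have "span_dim L = card (vp n ` C)"
    unfolding span_dim_eq using V.dim_eq_card[OF _ ind] span_eq by (simp add: V.span_span)
  also have "\<dots> = card C" using card_image[OF injC] .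
  also have "\<dots> = card (lev ` C)"
  proof -
    have "inj_on lev C"
    proof (rule inj_onI)
      fix P Q assume "P \<in> C" "Q \<in> C" "lev P = lev Q"
      then have "pleq P Q \<or> pleq Q P" using chain by blast
      then show "P = Q" using \<open>lev P = lev Q\<close> by (cases P; cases Q) (auto simp: pleq_def lev_def)
    qed
    then show ?thesis by (simp add: card_image)
  qed
  also have "lev ` C = lev ` S"
  proof (intro equalityI)
    show "lev ` C \<subseteq> lev ` S" using CS by auto
  next
    show "lev ` S \<subseteq> lev ` C"
    proof
      fix l assume "l \<in> lev ` S"
      then obtain P where P: "P \<in> S" "l = lev P" by blast
      then obtain x where x: "x \<in> set xs" "P \<in> blk n x" using S_sem by (auto simp: sem_def)
      obtain a B where aB: "x = (a, B)" by (cases x)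
      obtain Q where Q: "Q \<in> ch n x" "lev Q = lev P"
        using ch_level[of n a B P] good[OF x(1)] x(2) aB by auto
      have "P \<noteq> (0,0)" using P by (auto simp: S_def Estar_def)
      then have "lev P \<noteq> 0" by (cases P) (auto simp: lev_def)
      then have "Q \<noteq> (0,0)" using Q by (auto simp: lev_def)
      then have "Q \<in> C" using Q x by (auto simp: C_def)
      then show "l \<in> lev ` C" using Q P by (metis image_eqI)
    qed
  qed
  finally have "card (lev ` S) = k" using k by simp
  then show ?thesis using ens S_eq by (simp add: is_k_ensemble_def)
qed


end
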